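(* Let $\mathcal I=\mathbb R^d$ with the standard inner product, let $\mathcal G$ be a compact Abelian group with normalized Haar measure $dg$, acting on $\mathcal I$ by a unitary representation $I\mapsto gI$, and let $\mathcal T$ be the unit sphere of $\mathcal I$. For $I\in\mathcal I$ let $\rho_I$ be the law of $g\mapsto gI$ on $(\mathcal G,dg)$, and for $t\in\mathcal T$ let $\rho_I^t$ be the law on $\mathbb R$ of $g\mapsto\langle gI,t\rangle$ (the pushforward of $\rho_I$ under $I\mapsto\langle I,t\rangle$). Define $\mu(I)(t)=\mu^t(I)$ to be the cumulative distribution function of $\rho_I^t$, i.e. $\mu^t(I)(b)=\rho_I^t((-\infty,b])$ for $b\in\mathbb R$. Then for all $I\in\mathcal I$, $t\in\mathcal T$, $$\mu^t(I)(b)=\int \eta_b(\langle I,gt\rangle)\,dg,\qquad b\in\mathbb R,$$ where $\eta_b(a)=H(b-a)$ and $H$ is the Heaviside step function. Moreover, for all $I,I'\in\mathcal I$, $$I\sim I'\iff \mu(I)=\mu(I').$$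
   Context: $I\sim I'$ means there exists $g\in\mathcal G$ with $gI=I'$. $H(x)=1$ for $x\ge 0$ and $H(x)=0$ for $x<0$. *)

theory Defs
  imports "HOL-Analysis.Analysis" "HOL-Probability.Probability"
begin

definition heaviside :: "real \<Rightarrow> real" where
  "heaviside x = (if x \<ge> 0 then 1 else 0)"

definition eta :: "real \<Rightarrow> real \<Rightarrow> real" where
  "eta b a = heaviside (b - a)"

definition normalized_haar :: "'g::topological_ab_group_add measure \<Rightarrow> bool" where
  "normalized_haar M \<longleftrightarrow> prob_space M \<and> sets M = sets borel \<and>
     (\<forall>g. distr M borel (\<lambda>h. g + h) = M)"

definition unitary_rep :: "('g::topological_ab_group_add \<Rightarrow> real^'n \<Rightarrow> real^'n) \<Rightarrow> bool" where
  "unitary_rep act \<longleftrightarrow>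
     (\<forall>g. linear (act g)) \<and>
     (\<forall>g x y. inner (act g x) (act g y) = inner x y) \<and>
     (\<forall>g h. act (g + h) = act g \<circ> act h) \<and>
     act 0 = id \<and>
     (\<forall>x. continuous_on UNIV (\<lambda>g. act g x))"

definition orbit_law :: "'g measure \<Rightarrow> ('g \<Rightarrow> real^'n \<Rightarrow> real^'n) \<Rightarrow> real^'n \<Rightarrow> (real^'n) measure" where
  "orbit_law M act I = distr M borel (\<lambda>g. act g I)"

definition proj_law :: "'g measure \<Rightarrow> ('g \<Rightarrow> real^'n \<Rightarrow> real^'n) \<Rightarrow> real^'n \<Rightarrow> real^'n \<Rightarrow> real measure" where
  "proj_law M act I t = distr (orbit_law M act I) borel (\<lambda>x. inner x t)"

definition mu :: "'g measure \<Rightarrow> ('g \<Rightarrow> real^'n \<Rightarrow> real^'n) \<Rightarrow> real^'n \<Rightarrow> real^'n \<Rightarrow> real \<Rightarrow> real" where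
  "mu M act I t b = measure (proj_law M act I t) {..b}"

definition orbit_equiv :: "('g \<Rightarrow> real^'n \<Rightarrow> real^'n) \<Rightarrow> real^'n \<Rightarrow> real^'n \<Rightarrow> bool" where
  "orbit_equiv act I I' \<longleftrightarrow> (\<exists>g. act g I = I')"

end

theory Submission imports Defs begin

lemma haar_basic:
  fixes M :: "'g::topological_ab_group_add measure"
  assumes "normalized_haar M"
  shows "prob_space M" "sets M = sets borel" "space M = UNIV"
    "\<And>g. distr M borel (\<lambda>h. g + h) = M"
proof -
  have h: "prob_space M" "sets M = sets borel" "\<And>g. distr M borel (\<lambda>h. g + h) = M"
    using assms unfolding normalized_haar_def by auto
  show "prob_space M" "sets M = sets borel" "\<And>g. distr M borel (\<lambda>h. g + h) = M" by (fact h)+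
  show "space M = UNIV" using sets_eq_imp_space_eq[OF h(2)] by simp
qed

lemma haar_cont_meas:
  fixes M :: "'g::topological_ab_group_add measure" and f :: "'g \<Rightarrow> 'b::topological_space"
  assumes "normalized_haar M" "continuous_on UNIV f"
  shows "f \<in> borel_measurable M"
  by (subst measurable_cong_sets[OF haar_basic(2)[OF assms(1)] refl])
     (rule borel_measurable_continuous_onI[OF assms(2)])

lemma haar_inv:
  fixes M :: "'g::topological_ab_group_add measure" and f :: "'g \<Rightarrow> ennreal"
  assumes H: "normalized_haar M"
    and fm: "f \<in> borel_measurable borel"
    and pm: "(\<lambda>x. f (fst x - snd x)) \<in> borel_measurable (M \<Otimes>\<^sub>M M)"
  shows "(\<integral>\<^sup>+g. f (- g) \<partial>M) = (\<integral>\<^sup>+g. f g \<partial>M)"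
proof -
  note hb = haar_basic[OF H]
  interpret P: prob_space M by (rule hb(1))
  interpret PP: pair_sigma_finite M M
    by (simp add: pair_sigma_finite_def P.sigma_finite_measure_axioms)
  have mconv: "\<And>F. F \<in> borel_measurable borel \<Longrightarrow> F \<in> borel_measurable M"
    by (subst measurable_cong_sets[OF hb(2) refl])
  have tm: "\<And>g. (\<lambda>h. g + h) \<in> measurable M borel"
    by (rule haar_cont_meas[OF H]) (intro continuous_intros)
  have A: "(\<integral>\<^sup>+g. f (h - g) \<partial>M) = (\<integral>\<^sup>+g. f (- g) \<partial>M)" for h
  proof -
    have m: "(\<lambda>x. f (- x)) \<in> borel_measurable borel"
      by (rule measurable_compose[OF _ fm]) (intro borel_measurable_continuous_onI continuous_intros)
    have "(\<integral>\<^sup>+g. f (- g) \<partial>M) = (\<integral>\<^sup>+g. f (- g) \<partial>distr M borel (\<lambda>x. - h + x))"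
      by (simp only: hb(4))
    also have "\<dots> = (\<integral>\<^sup>+g. f (- (- h + g)) \<partial>M)"
      by (rule nn_integral_distr[OF tm]) (simp add: m)
    also have "\<dots> = (\<integral>\<^sup>+g. f (h - g) \<partial>M)"
      by (simp add: algebra_simps)
    finally show ?thesis by simp
  qed
  have B: "(\<integral>\<^sup>+h. f (h - g) \<partial>M) = (\<integral>\<^sup>+h. f h \<partial>M)" for g
  proof -
    have "(\<integral>\<^sup>+h. f h \<partial>M) = (\<integral>\<^sup>+h. f h \<partial>distr M borel (\<lambda>x. - g + x))"
      by (simp only: hb(4))
    also have "\<dots> = (\<integral>\<^sup>+h. f (- g + h) \<partial>M)"
      by (rule nn_integral_distr[OF tm]) (simp add: fm)
    finally show ?thesis by (simp add: algebra_simps)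
  qed
  have "(\<integral>\<^sup>+g. f (- g) \<partial>M) = (\<integral>\<^sup>+h. (\<integral>\<^sup>+g. f (h - g) \<partial>M) \<partial>M)"
    using A P.emeasure_space_1 hb(3) by simp
  also have "\<dots> = (\<integral>\<^sup>+g. (\<integral>\<^sup>+h. f (h - g) \<partial>M) \<partial>M)"
    using PP.Fubini'[of "\<lambda>h g. f (h - g)"] pm by (simp add: case_prod_beta')
  also have "\<dots> = (\<integral>\<^sup>+h. f h \<partial>M)"
    using B P.emeasure_space_1 hb(3) by simp
  finally show ?thesis .
qed


lemma rep_basic:
  fixes act :: "'g::topological_ab_group_add \<Rightarrow> real^'n \<Rightarrow> real^'n"
  assumes "unitary_rep act"
  shows "\<And>g. linear (act g)" "\<And>g x y. inner (act g x) (act g y) = inner x y"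
    "\<And>g h x. act (g + h) x = act g (act h x)" "\<And>x. act 0 x = x"
    "\<And>x. continuous_on UNIV (\<lambda>g. act g x)"
  using assms unfolding unitary_rep_def by auto

lemma rep_norm:
  assumes "unitary_rep act"
  shows "norm (act g x) = norm x"
  using rep_basic(2)[OF assms] by (simp add: norm_eq_sqrt_inner)

lemma mu_eq:
  fixes M :: "'g::topological_ab_group_add measure" and act :: "'g \<Rightarrow> real^'n \<Rightarrow> real^'n"
  assumes H: "normalized_haar M" and R: "unitary_rep act"
  shows "mu M act I t b = measure M {g. inner (act g I) t \<le> b}"
proof -
  have m1: "(\<lambda>g. act g I) \<in> measurable M borel"
    by (rule haar_cont_meas[OF H rep_basic(5)[OF R]])
  have m2: "(\<lambda>x. inner x t) \<in> measurable borel borel"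
    by (intro borel_measurable_continuous_onI continuous_intros)
  show ?thesis
    unfolding mu_def proj_law_def orbit_law_def
    using haar_basic(3)[OF H] measurable_comp[OF m1 m2]
    by (simp add: distr_distr[OF m2 m1] comp_def, subst measure_distr) (auto simp: vimage_def comp_def)
qed

lemma act_expand:
  assumes R: "unitary_rep act"
  shows "inner I (act h y) = (\<Sum>i\<in>UNIV. y $ i * inner I (act h (axis i 1)))"
proof -
  have "act h y = act h (\<Sum>i\<in>UNIV. y $ i *\<^sub>R axis i 1)"
    using basis_expansion[where x=y] by (simp add: scalar_mult_eq_scaleR)
  also have "\<dots> = (\<Sum>i\<in>UNIV. y $ i *\<^sub>R act h (axis i 1))"
    using rep_basic(1)[OF R, of h] by (simp add: linear_sum linear_scale)
  finally show ?thesis by (simp add: inner_sum_right)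
qed

lemma part1:
  fixes M :: "'g::topological_ab_group_add measure" and act :: "'g \<Rightarrow> real^'n \<Rightarrow> real^'n"
  assumes H: "normalized_haar M" and R: "unitary_rep act"
  shows "mu M act I t b = (\<integral>g. eta b (inner I (act g t)) \<partial>M)"
proof -
  note hb = haar_basic[OF H]
  interpret P: prob_space M by (rule hb(1))
  define A where "A = {g. inner I (act g t) \<le> b}"
  have cA: "continuous_on UNIV (\<lambda>g. inner I (act g t))"
    by (intro continuous_intros rep_basic(5)[OF R])
  have Ab: "A \<in> sets borel"
    using measurable_sets[OF borel_measurable_continuous_onI[OF cA], of "{..b}"]
    unfolding A_def by (simp add: vimage_def)
  have AM: "A \<in> sets M" using Ab hb(2) by simp
  have fm: "(indicator A :: 'g \<Rightarrow> ennreal) \<in> borel_measurable borel"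
    using Ab by simp
  define \<phi> where "\<phi> x = (\<Sum>i\<in>UNIV. (act (- snd x) t) $ i * inner I (act (fst x) (axis i 1)))"
    for x :: "'g \<times> 'g"
  have phi: "\<phi> x = inner I (act (fst x - snd x) t)" for x
    unfolding \<phi>_def act_expand[OF R, of I "fst x" "act (- snd x) t", symmetric]
    using rep_basic(3)[OF R, of "fst x" "- snd x"] by simp
  have c1: "continuous_on UNIV (\<lambda>g. (act (- g) t) $ i)" for i
    unfolding cart_eq_inner_axis
    by (intro continuous_intros continuous_on_compose2[OF rep_basic(5)[OF R]]) auto
  have c2: "continuous_on UNIV (\<lambda>g. inner I (act g (axis i 1)))" for i
    by (intro continuous_intros rep_basic(5)[OF R])
  have phim: "\<phi> \<in> borel_measurable (M \<Otimes>\<^sub>M M)"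
    unfolding \<phi>_def
    by (intro borel_measurable_sum borel_measurable_times
        measurable_compose[OF measurable_snd haar_cont_meas[OF H c1]]
        measurable_compose[OF measurable_fst haar_cont_meas[OF H c2]])
  have pm: "(\<lambda>x. (indicator A (fst x - snd x) :: ennreal)) \<in> borel_measurable (M \<Otimes>\<^sub>M M)"
  proof -
    have "(\<lambda>x. (indicator A (fst x - snd x) :: ennreal)) = (\<lambda>x. if \<phi> x \<le> b then 1 else 0)"
      by (auto simp: A_def phi indicator_def)
    also have "\<dots> \<in> borel_measurable (M \<Otimes>\<^sub>M M)"
      using phim by measurable
    finally show ?thesis .
  qed
  have inv: "\<And>g. inner (act g I) t = inner I (act (- g) t)"
  proof -
    fix g
    have "inner (act g I) t = inner (act g I) (act g (act (- g) t))"
      using rep_basic(3)[OF R, of g "- g" t] rep_basic(4)[OF R] by simp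
    thus "inner (act g I) t = inner I (act (- g) t)" using rep_basic(2)[OF R] by simp
  qed
  have S: "{g. inner (act g I) t \<le> b} = {g. - g \<in> A}"
    by (simp add: A_def inv)
  have SM: "{g. - g \<in> A} \<in> sets M"
    using measurable_sets[OF haar_cont_meas[OF H continuous_on_minus[OF continuous_on_id]] Ab]
      hb(3) by (simp add: vimage_def)
  have "emeasure M {g. - g \<in> A} = (\<integral>\<^sup>+g. indicator A (- g) \<partial>M)"
  proof -
    have "(\<lambda>g. indicator A (- g) :: ennreal) = indicator {g. - g \<in> A}"
      by (auto simp: indicator_def)
    thus ?thesis using SM by simp
  qed
  also have "\<dots> = (\<integral>\<^sup>+g. indicator A g \<partial>M)"
    by (rule haar_inv[OF H fm pm])
  also have "\<dots> = emeasure M A" using AM by simp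
  finally have X1: "measure M {g. - g \<in> A} = measure M A" by (simp add: measure_def)
  have X2: "(\<integral>g. eta b (inner I (act g t)) \<partial>M) = measure M A"
  proof -
    have "(\<lambda>g. eta b (inner I (act g t))) = indicator A"
      by (auto simp: eta_def heaviside_def A_def indicator_def)
    thus ?thesis using AM by simp
  qed
  have X3: "mu M act I t b = measure M {g. - g \<in> A}"
    unfolding S[symmetric] by (rule mu_eq[OF H R])
  show ?thesis unfolding X3 X1 X2 ..
qed


lemma haar_open_pos:
  fixes M :: "'g::topological_ab_group_add measure"
  assumes H: "normalized_haar M" and C: "compact (UNIV :: 'g set)"
    and U: "open U" "0 \<in> U"
  shows "measure M U > 0"
proof (rule ccontr)
  assume "\<not> measure M U > 0"
  hence U0: "measure M U = 0" using measure_nonneg[of M U] by linarith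
  note hb = haar_basic[OF H]
  interpret P: prob_space M by (rule hb(1))
  have UM: "U \<in> sets M" using U hb(2) by simp
  have tm: "(\<lambda>h. g + h) \<in> measurable M borel" for g
    by (rule haar_cont_meas[OF H]) (intro continuous_intros)
  have T0: "measure M ((\<lambda>h. g + h) -` U) = 0" for g
  proof -
    have "measure M U = measure (distr M borel (\<lambda>h. g + h)) U" by (simp only: hb(4))
    also have "\<dots> = measure M ((\<lambda>h. g + h) -` U)"
      by (subst measure_distr[OF tm]) (auto simp: U(1) hb(3))
    finally show ?thesis using U0 by simp
  qed
  have op: "open ((\<lambda>h. g + h) -` U)" for g
    by (rule open_vimage[OF U(1)]) (intro continuous_intros)
  have cov: "UNIV \<subseteq> (\<Union>g\<in>UNIV. (\<lambda>h. g + h) -` U)"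
  proof
    fix x :: 'g
    have "x \<in> (\<lambda>h. (- x) + h) -` U" using U(2) by simp
    thus "x \<in> (\<Union>g\<in>UNIV. (\<lambda>h. g + h) -` U)" by blast
  qed
  obtain D where D: "finite D" "UNIV \<subseteq> (\<Union>g\<in>D. (\<lambda>h. g + h) -` U)"
    by (rule compactE_image[OF C, of UNIV "\<lambda>g. (\<lambda>h. g + h) -` U", OF op cov]) auto
  have sets: "(\<lambda>h. g + h) -` U \<in> sets M" for g
    using borel_open[OF op] hb(2) by simp
  have "1 = measure M (\<Union>g\<in>D. (\<lambda>h. g + h) -` U)"
  proof -
    have "(\<Union>g\<in>D. (\<lambda>h. g + h) -` U) = UNIV" using D(2) by blast
    thus ?thesis using P.prob_space hb(3) by simp
  qed
  also have "\<dots> \<le> (\<Sum>g\<in>D. measure M ((\<lambda>h. g + h) -` U))"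
    by (rule measure_UNION_le[OF D(1)]) (simp add: sets)
  also have "\<dots> = 0" by (simp add: T0)
  finally show False by simp
qed

lemma forward:
  fixes M :: "'g::topological_ab_group_add measure" and act :: "'g \<Rightarrow> real^'n \<Rightarrow> real^'n"
  assumes H: "normalized_haar M" and R: "unitary_rep act"
  shows "mu M act (act g I) t b = mu M act I t b"
proof -
  note hb = haar_basic[OF H]
  have tm: "(\<lambda>h. g + h) \<in> measurable M borel"
    by (rule haar_cont_meas[OF H]) (intro continuous_intros)
  define B where "B = {h. inner (act h I) t \<le> b}"
  have cA: "continuous_on UNIV (\<lambda>g. inner (act g I) t)"
    by (intro continuous_intros rep_basic(5)[OF R])
  have Bb: "B \<in> sets borel"
    using measurable_sets[OF borel_measurable_continuous_onI[OF cA], of "{..b}"]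
    unfolding B_def by (simp add: vimage_def)
  have "measure M B = measure (distr M borel (\<lambda>h. g + h)) B" by (simp only: hb(4))
  also have "\<dots> = measure M ((\<lambda>h. g + h) -` B)"
    using measure_distr[OF tm Bb] hb(3) by simp
  also have "(\<lambda>h. g + h) -` B = {h. inner (act h (act g I)) t \<le> b}"
  proof -
    have "act (g + h) I = act h (act g I)" for h
      using rep_basic(3)[OF R, of h g I] by (metis add.commute)
    thus ?thesis unfolding B_def by auto
  qed
  finally have fin: "measure M B = measure M {h. inner (act h (act g I)) t \<le> b}" .
  have m1: "mu M act (act g I) t b = measure M {h. inner (act h (act g I)) t \<le> b}"
    by (rule mu_eq[OF H R])
  have m2: "mu M act I t b = measure M B"
    unfolding B_def by (rule mu_eq[OF H R])
  show ?thesis by (simp only: m1 m2 fin)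
qed

lemma key:
  fixes M :: "'g::topological_ab_group_add measure" and act :: "'g \<Rightarrow> real^'n \<Rightarrow> real^'n"
  assumes H: "normalized_haar M" and R: "unitary_rep act" and C: "compact (UNIV :: 'g set)"
    and J: "J \<noteq> 0" and eq: "mu M act J (J /\<^sub>R norm J) = mu M act K (J /\<^sub>R norm J)"
    and e: "e > 0"
  shows "\<exists>g. inner (act g K) (J /\<^sub>R norm J) > norm J - e"
proof (rule ccontr)
  assume ne: "\<not> ?thesis"
  define t where "t = J /\<^sub>R norm J"
  note hb = haar_basic[OF H]
  interpret P: prob_space M by (rule hb(1))
  define U where "U = {g. inner (act g J) t > norm J - e}"
  have cA: "continuous_on UNIV (\<lambda>g. inner (act g J) t)"
    by (intro continuous_intros rep_basic(5)[OF R])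
  have oU: "open U"
    unfolding U_def using open_Collect_less[OF continuous_on_const cA] by simp
  have "inner J t = norm J"
    using J by (simp add: t_def power2_norm_eq_inner[symmetric] power2_eq_square)
  hence "0 \<in> U" unfolding U_def using rep_basic(4)[OF R] e by simp
  hence pos: "measure M U > 0" using haar_open_pos[OF H C oU] by simp
  have UM: "U \<in> sets M" using oU hb(2) by simp
  have "{g. inner (act g J) t \<le> norm J - e} = space M - U"
    using hb(3) by (auto simp: U_def)
  hence "mu M act J t (norm J - e) = 1 - measure M U"
    using mu_eq[OF H R] P.prob_compl[OF UM] by simp
  moreover have "mu M act K t (norm J - e) = 1"
  proof -
    have "{g. inner (act g K) t \<le> norm J - e} = space M"
      using ne hb(3) by (auto simp: t_def not_less)
    thus ?thesis using mu_eq[OF H R] P.prob_space by simp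
  qed
  ultimately show False using eq pos by (simp add: t_def)
qed


lemma norm_ge:
  fixes M :: "'g::topological_ab_group_add measure" and act :: "'g \<Rightarrow> real^'n \<Rightarrow> real^'n"
  assumes H: "normalized_haar M" and R: "unitary_rep act" and C: "compact (UNIV :: 'g set)"
    and J: "J \<noteq> 0" and eq: "mu M act J (J /\<^sub>R norm J) = mu M act K (J /\<^sub>R norm J)"
  shows "norm J \<le> norm K"
proof (rule field_le_epsilon)
  fix e :: real assume "e > 0"
  then obtain g where g: "inner (act g K) (J /\<^sub>R norm J) > norm J - e"
    using key[OF H R C J eq] by blast
  have "inner (act g K) (J /\<^sub>R norm J) \<le> norm (act g K) * norm (J /\<^sub>R norm J)"
    by (rule norm_cauchy_schwarz)
  also have "\<dots> = norm K" using J rep_norm[OF R] by simp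
  finally show "norm J \<le> norm K + e" using g by simp
qed

lemma in_orbit:
  fixes M :: "'g::topological_ab_group_add measure" and act :: "'g \<Rightarrow> real^'n \<Rightarrow> real^'n"
  assumes H: "normalized_haar M" and R: "unitary_rep act" and C: "compact (UNIV :: 'g set)"
    and J: "J \<noteq> 0" and eq: "mu M act J (J /\<^sub>R norm J) = mu M act K (J /\<^sub>R norm J)"
    and nK: "norm K = norm J"
  shows "\<exists>g. act g K = J"
proof -
  define r where "r = norm J"
  have r: "r > 0" using J by (simp add: r_def)
  have "J \<in> closure (range (\<lambda>g. act g K))"
    unfolding closure_approachable
  proof (intro allI impI)
    fix e :: real assume e: "e > 0"
    then obtain g where g: "inner (act g K) (J /\<^sub>R norm J) > r - e^2 / (2*r)"
      using key[OF H R C J eq, of "e^2/(2*r)"] r unfolding r_def by auto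
    have ip: "inner (act g K) J > r * r - e^2 / 2"
    proof -
      have "inner (act g K) J = r * inner (act g K) (J /\<^sub>R norm J)"
        using r by (simp add: r_def)
      also have "\<dots> > r * (r - e^2 / (2*r))"
        using g r by (simp add: mult_strict_left_mono)
      finally have "inner (act g K) J > r * (r - e^2 / (2*r))" .
      moreover have "r * (r - e^2/(2*r)) = r*r - e^2/2" using r by (simp add: field_simps)
      ultimately show ?thesis by linarith
    qed
    have "(dist (act g K) J)^2 = (norm (act g K))^2 + (norm J)^2 - 2 * inner (act g K) J"
      by (simp add: dist_norm power2_norm_eq_inner inner_diff algebra_simps inner_commute)
    also have "\<dots> < e^2"
      using ip rep_norm[OF R, of g K] nK by (simp add: r_def power2_eq_square)
    finally have "dist (act g K) J < e"
      using e by (simp add: power_less_imp_less_base)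
    thus "\<exists>y\<in>range (\<lambda>g. act g K). dist y J < e" by blast
  qed
  moreover have "closed (range (\<lambda>g. act g K))"
    by (intro compact_imp_closed compact_continuous_image rep_basic(5)[OF R] C)
  ultimately show ?thesis by (simp add: closure_closed) blast
qed

theorem theorem5:
  fixes M :: "'g::{topological_ab_group_add, t2_space} measure"
    and act :: "'g \<Rightarrow> real^'n \<Rightarrow> real^'n"
  assumes "compact (UNIV :: 'g set)"
    and "normalized_haar M"
    and "unitary_rep act"
  shows "(\<forall>I t b. t \<in> sphere 0 1 \<longrightarrow>
            mu M act I t b = (\<integral>g. eta b (inner I (act g t)) \<partial>M))
       \<and> (\<forall>I I'. orbit_equiv act I I' \<longleftrightarrow>
            (\<forall>t \<in> sphere 0 1. mu M act I t = mu M act I' t))"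
proof (intro conjI allI impI)
  fix I :: "real^'n" and t b
  show "mu M act I t b = (\<integral>g. eta b (inner I (act g t)) \<partial>M)"
    by (rule part1[OF assms(2,3)])
next
  fix I I' :: "real^'n"
  note H = assms(2) and R = assms(3) and C = assms(1)
  show "orbit_equiv act I I' \<longleftrightarrow> (\<forall>t \<in> sphere 0 1. mu M act I t = mu M act I' t)"
  proof
    assume "orbit_equiv act I I'"
    then obtain g where "act g I = I'" by (auto simp: orbit_equiv_def)
    thus "\<forall>t \<in> sphere 0 1. mu M act I t = mu M act I' t"
      using forward[OF H R, of g I] by auto
  next
    assume A: "\<forall>t \<in> sphere 0 1. mu M act I t = mu M act I' t"
    have sph: "J /\<^sub>R norm J \<in> sphere 0 1" if "J \<noteq> 0" for J :: "real^'n"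
      using that by simp
    show "orbit_equiv act I I'"
    proof (cases "I' = 0")
      case True
      have "I = 0"
      proof (rule ccontr)
        assume "I \<noteq> 0"
        hence "norm I \<le> norm I'" using norm_ge[OF H R C, of I I'] A sph by simp
        thus False using True \<open>I \<noteq> 0\<close> by simp
      qed
      thus ?thesis using True rep_basic(4)[OF R] by (auto simp: orbit_equiv_def)
    next
      case False
      have e1: "mu M act I' (I' /\<^sub>R norm I') = mu M act I (I' /\<^sub>R norm I')"
        using A sph[OF False] by simp
      have n1: "norm I' \<le> norm I" by (rule norm_ge[OF H R C False e1])
      have "I \<noteq> 0" using n1 False by auto
      hence "norm I \<le> norm I'" using norm_ge[OF H R C, of I I'] A sph by simp
      hence "norm I = norm I'" using n1 by simp
      thus ?thesis using in_orbit[OF H R C False e1] by (auto simp: orbit_equiv_def)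
    qed
  qed
qed

end
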